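(* Let $m\ge2$ be an integer with $m\not\equiv2\pmod4$ and let $p,q$ be positive integers. If $\zeta_m^p,\zeta_m^{-p},\zeta_m^q,\zeta_m^{-q}$ are $\mathbb{Q}$-linearly independent, then for every choice of signs, $\Delta=\frac{\pm\zeta_m^p\pm\zeta_m^{-p}\pm\zeta_m^q\pm\zeta_m^{-q}}{2}$ is not an algebraic integer, where $\zeta_m=e^{\frac{2\pi}{m}i}$. *)

theory Defs
  imports Complex_Main "HOL-Computational_Algebra.Polynomial"
begin

definition rat_lin_indep4 :: "complex \<Rightarrow> complex \<Rightarrow> complex \<Rightarrow> complex \<Rightarrow> bool" where
  "rat_lin_indep4 a b c d \<longleftrightarrow>
     (\<forall>q1 q2 q3 q4 :: rat.
        of_rat q1 * a + of_rat q2 * b + of_rat q3 * c + of_rat q4 * d = 0 \<longrightarrow>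
        q1 = 0 \<and> q2 = 0 \<and> q3 = 0 \<and> q4 = 0)"

definition zeta :: "nat \<Rightarrow> complex" where
  "zeta m = cis (2 * pi / real m)"

end

theory Submission
  imports Defs "Jordan_Normal_Form.Char_Poly"
begin


definition zspan :: "complex set \<Rightarrow> complex set" where
  "zspan V = {(\<Sum>u\<in>V. of_int (c u) * u) | c. True}"

lemma zspan_I: "a = (\<Sum>u\<in>V. of_int (c u) * u) \<Longrightarrow> a \<in> zspan V"
  unfolding zspan_def by blast

lemma zspan_0: "0 \<in> zspan V"
  by (rule zspan_I[where c="\<lambda>_. 0"]) simp

lemma zspan_add: assumes "a \<in> zspan V" "b \<in> zspan V" shows "a + b \<in> zspan V"
proof -
  from assms obtain c d where "a = (\<Sum>u\<in>V. of_int (c u) * u)" "b = (\<Sum>u\<in>V. of_int (d u) * u)"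
    unfolding zspan_def by blast
  hence "a + b = (\<Sum>u\<in>V. of_int (c u + d u) * u)" by (simp add: sum.distrib distrib_right)
  thus ?thesis by (rule zspan_I)
qed

lemma zspan_smult: assumes "a \<in> zspan V" shows "of_int k * a \<in> zspan V"
proof -
  from assms obtain c where "a = (\<Sum>u\<in>V. of_int (c u) * u)" unfolding zspan_def by blast
  hence "of_int k * a = (\<Sum>u\<in>V. of_int (k * c u) * u)" by (simp add: sum_distrib_left mult.assoc)
  thus ?thesis by (rule zspan_I)
qed

lemma zspan_mem: assumes "finite V" "v \<in> V" shows "v \<in> zspan V"
proof -
  have "(\<Sum>u\<in>V. of_int (if u = v then 1 else 0) * u) = (\<Sum>u\<in>V. if u = v then u else 0)"
    by (intro sum.cong) auto
  also have "\<dots> = v" using assms by simp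
  finally show ?thesis by (metis zspan_I)
qed

lemma zspan_sum: assumes "\<And>i. i \<in> I \<Longrightarrow> f i \<in> zspan V"
  shows "(\<Sum>i\<in>I. f i) \<in> zspan V"
  using assms by (induction I rule: infinite_finite_induct) (auto intro: zspan_0 zspan_add)

lemma zspan_mult_subset: assumes "finite V" "a \<in> zspan V" "\<And>u. u \<in> V \<Longrightarrow> u * b \<in> zspan W"
  shows "a * b \<in> zspan W"
proof -
  from assms obtain c where a: "a = (\<Sum>u\<in>V. of_int (c u) * u)" unfolding zspan_def by blast
  have "a * b = (\<Sum>u\<in>V. of_int (c u) * (u * b))" unfolding a by (simp add: sum_distrib_right mult.assoc)
  also have "\<dots> \<in> zspan W" by (intro zspan_sum zspan_smult assms(3))
  finally show ?thesis .
qed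

lemma alg_int_crit:
  fixes x :: complex
  assumes V: "finite V" "1 \<in> V" and st: "\<And>v. v \<in> V \<Longrightarrow> x * v \<in> zspan V"
  shows "algebraic_int x"
proof -
  obtain vs where vs: "distinct vs" "set vs = V" using finite_distinct_list[OF V(1)] by blast
  define n where "n = length vs"
  have "\<forall>v\<in>V. \<exists>c. x * v = (\<Sum>u\<in>V. of_int (c u) * u)" using st unfolding zspan_def by blast
  then obtain C where C: "\<And>v. v \<in> V \<Longrightarrow> x * v = (\<Sum>u\<in>V. of_int (C v u) * u)" by metis
  define Ci :: "int mat" where "Ci = mat n n (\<lambda>(i,j). C (vs!i) (vs!j))"
  define A :: "complex mat" where "A = map_mat of_int Ci"
  define v where "v = vec n (\<lambda>i. vs!i)"
  have Ci: "Ci \<in> carrier_mat n n" unfolding Ci_def by simp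
  have A: "A \<in> carrier_mat n n" unfolding A_def using Ci by simp
  have bij: "bij_betw (\<lambda>i. vs!i) {..<n} V" using bij_betw_nth[OF vs(1)] vs(2) n_def
    by (simp add: atLeast0LessThan)
  have ev1: "A *\<^sub>v v = x \<cdot>\<^sub>v v"
  proof (rule eq_vecI)
    fix i assume i: "i < dim_vec (x \<cdot>\<^sub>v v)"
    hence i': "i < n" by (simp add: v_def)
    have "(A *\<^sub>v v) $ i = (\<Sum>j<n. of_int (C (vs!i) (vs!j)) * vs!j)"
      using i' by (simp add: A_def Ci_def v_def mult_mat_vec_def scalar_prod_def atLeast0LessThan)
    also have "\<dots> = (\<Sum>u\<in>V. of_int (C (vs!i) u) * u)"
      by (rule sum.reindex_bij_betw[OF bij])
    also have "\<dots> = x * vs!i" using C[of "vs!i"] i' vs n_def by auto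
    finally show "(A *\<^sub>v v) $ i = (x \<cdot>\<^sub>v v) $ i" using i' by (simp add: v_def)
  qed (simp add: v_def A_def Ci_def)
  have ev2: "v \<noteq> 0\<^sub>v n"
  proof
    assume "v = 0\<^sub>v n"
    obtain i where "i < n" "vs!i = 1" using V(2) vs n_def by (metis in_set_conv_nth)
    with \<open>v = 0\<^sub>v n\<close> show False unfolding v_def by (metis index_vec index_zero_vec(1) zero_neq_one)
  qed
  have "eigenvalue A x" unfolding eigenvalue_def eigenvector_def using A ev1 ev2
    by (intro exI[of _ v]) (auto simp: v_def)
  hence "poly (char_poly A) x = 0" using eigenvalue_root_char_poly[OF A] by simp
  moreover have "char_poly A = map_poly of_int (char_poly Ci)"
    unfolding A_def by (rule of_int_hom.char_poly_hom[OF Ci])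
  moreover have "lead_coeff (char_poly Ci) = 1" using degree_monic_char_poly[OF Ci] by simp
  ultimately show ?thesis unfolding algebraic_int_altdef_ipoly by auto
qed


lemma alg_int_span:
  fixes x :: complex
  assumes "algebraic_int x"
  obtains V where "finite V" "1 \<in> V" "\<And>v. v \<in> V \<Longrightarrow> x * v \<in> zspan V"
proof -
  from assms obtain p where p: "poly (map_poly of_int p) x = 0" "lead_coeff p = 1"
    unfolding algebraic_int_altdef_ipoly by blast
  define d where "d = degree p"
  have "d > 0"
  proof (rule ccontr)
    assume "\<not> d > 0" hence "degree p = 0" by (simp add: d_def)
    hence "poly (map_poly of_int p) x = (of_int (coeff p 0) :: complex)"
      by (simp add: poly_altdef degree_map_poly coeff_map_poly)
    moreover have "coeff p 0 = 1" using p(2) \<open>degree p = 0\<close> by simp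
    ultimately show False using p(1) by simp
  qed
  define V where "V = (\<lambda>i. x ^ i) ` {..<d}"
  have fin: "finite V" unfolding V_def by simp
  have one: "1 \<in> V" unfolding V_def using \<open>d > 0\<close> by (auto intro!: image_eqI[of _ _ 0])
  have xd: "x ^ d \<in> zspan V"
  proof -
    let ?q = "map_poly (of_int :: int \<Rightarrow> complex) p"
    have dq: "degree ?q = d" by (simp add: d_def degree_map_poly)
    have cd: "coeff p d = 1" using p(2) by (simp add: d_def)
    have "0 = poly ?q x" using p(1) by simp
    also have "\<dots> = (\<Sum>j\<le>d. coeff ?q j * x ^ j)" by (simp only: poly_altdef dq)
    also have "\<dots> = (\<Sum>j<Suc d. of_int (coeff p j) * x ^ j)"
      by (simp only: lessThan_Suc_atMost coeff_map_poly of_int_0)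
    also have "\<dots> = (\<Sum>j<d. of_int (coeff p j) * x ^ j) + x ^ d"
      by (simp only: sum.lessThan_Suc cd of_int_1 mult_1)
    finally have h0: "0 = (\<Sum>j<d. of_int (coeff p j) * x ^ j) + x ^ d" .
    have "x ^ d = - (\<Sum>j<d. of_int (coeff p j) * x ^ j)"
      using h0 by (metis add.commute add_eq_0_iff)
    also have "\<dots> = (\<Sum>j<d. of_int (- coeff p j) * x ^ j)" by (simp add: sum_negf)
    also have "\<dots> \<in> zspan V"
      by (intro zspan_sum zspan_smult zspan_mem[OF fin]) (auto simp: V_def)
    finally show ?thesis .
  qed
  have "x * v \<in> zspan V" if "v \<in> V" for v
  proof -
    from that obtain i where i: "i < d" "v = x ^ i" unfolding V_def by auto
    show ?thesis
    proof (cases "Suc i < d")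
      case True thus ?thesis using i by (intro zspan_mem[OF fin]) (auto simp: V_def intro!: image_eqI[of _ _ "Suc i"])
    next
      case False hence "Suc i = d" using i by simp
      thus ?thesis using xd i by (metis power_Suc)
    qed
  qed
  thus ?thesis using that fin one by blast
qed

lemma algebraic_int_mult_c:
  fixes x y :: complex
  assumes "algebraic_int x" "algebraic_int y" shows "algebraic_int (x * y)"
proof -
  obtain V where V: "finite V" "1 \<in> V" "\<And>v. v \<in> V \<Longrightarrow> x * v \<in> zspan V" using alg_int_span[OF assms(1)] by blast
  obtain U where U: "finite U" "1 \<in> U" "\<And>v. v \<in> U \<Longrightarrow> y * v \<in> zspan U" using alg_int_span[OF assms(2)] by blast
  define W where "W = (\<lambda>(a,b). a * b) ` (V \<times> U)"
  have fW: "finite W" unfolding W_def using V U by simp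
  have memW: "a * b \<in> zspan W" if "a \<in> V" "b \<in> U" for a b
    using that by (intro zspan_mem[OF fW]) (auto simp: W_def)
  show ?thesis
  proof (rule alg_int_crit[OF fW])
    show "1 \<in> W" using V U unfolding W_def by (auto intro!: image_eqI[of _ _ "(1,1)"])
  next
    fix w assume "w \<in> W"
    then obtain a b where ab: "a \<in> V" "b \<in> U" "w = a * b" unfolding W_def by auto
    have "x * y * w = (x * a) * (y * b)" using ab by (simp add: ac_simps)
    also have "\<dots> \<in> zspan W"
    proof (rule zspan_mult_subset[OF V(1) V(3)[OF ab(1)]])
      fix u assume u: "u \<in> V"
      have "u * (y * b) = (y * b) * u" by simp
      also have "\<dots> \<in> zspan W"
        by (rule zspan_mult_subset[OF U(1) U(3)[OF ab(2)]]) (use u memW in \<open>metis mult.commute\<close>)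
      finally show "u * (y * b) \<in> zspan W" .
    qed
    finally show "x * y * w \<in> zspan W" .
  qed
qed

lemma algebraic_int_add_c:
  fixes x y :: complex
  assumes "algebraic_int x" "algebraic_int y" shows "algebraic_int (x + y)"
proof -
  obtain V where V: "finite V" "1 \<in> V" "\<And>v. v \<in> V \<Longrightarrow> x * v \<in> zspan V" using alg_int_span[OF assms(1)] by blast
  obtain U where U: "finite U" "1 \<in> U" "\<And>v. v \<in> U \<Longrightarrow> y * v \<in> zspan U" using alg_int_span[OF assms(2)] by blast
  define W where "W = (\<lambda>(a,b). a * b) ` (V \<times> U)"
  have fW: "finite W" unfolding W_def using V U by simp
  have memW: "a * b \<in> zspan W" if "a \<in> V" "b \<in> U" for a b
    using that by (intro zspan_mem[OF fW]) (auto simp: W_def)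
  show ?thesis
  proof (rule alg_int_crit[OF fW])
    show "1 \<in> W" using V U unfolding W_def by (auto intro!: image_eqI[of _ _ "(1,1)"])
  next
    fix w assume "w \<in> W"
    then obtain a b where ab: "a \<in> V" "b \<in> U" "w = a * b" unfolding W_def by auto
    have "(x + y) * w = (x * a) * b + (y * b) * a" using ab by (simp add: algebra_simps)
    also have "\<dots> \<in> zspan W"
    proof (intro zspan_add)
      show "x * a * b \<in> zspan W"
        by (rule zspan_mult_subset[OF V(1) V(3)[OF ab(1)]]) (use ab memW in \<open>metis mult.commute\<close>)
      show "y * b * a \<in> zspan W"
        by (rule zspan_mult_subset[OF U(1) U(3)[OF ab(2)]]) (use ab memW in \<open>metis mult.commute\<close>)
    qed
    finally show "(x + y) * w \<in> zspan W" .
  qed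
qed

lemma algebraic_int_diff_c:
  fixes x y :: complex
  assumes "algebraic_int x" "algebraic_int y" shows "algebraic_int (x - y)"
  using algebraic_int_add_c[OF assms(1) algebraic_int_minus[OF assms(2)]] by simp

lemma algebraic_int_power_c:
  fixes x :: complex
  assumes "algebraic_int x" shows "algebraic_int (x ^ n)"
  by (induction n) (auto intro: algebraic_int_mult_c assms)

lemma algebraic_int_sum_c:
  fixes f :: "'a \<Rightarrow> complex"
  assumes "\<And>i. i \<in> I \<Longrightarrow> algebraic_int (f i)" shows "algebraic_int (\<Sum>i\<in>I. f i)"
  using assms by (induction I rule: infinite_finite_induct) (auto intro: algebraic_int_add_c)

lemma algebraic_int_root_unity:
  fixes w :: complex
  assumes "w ^ n = 1" "n > 0" shows "algebraic_int w"
proof (rule algebraic_int_root[where p = "monom 1 n"])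
  show "poly (monom 1 n) w = 1" using assms by (simp add: poly_monom)
qed (use assms in \<open>auto simp: degree_monom_eq coeff_monom\<close>)


lemma not_alg_int_inv_pow2:
  assumes "r \<ge> 1" shows "\<not> algebraic_int (1 / 2 ^ r :: complex)"
proof
  assume a: "algebraic_int (1 / 2 ^ r :: complex)"
  have "(1 / 2 ^ r :: complex) \<in> \<rat>" by simp
  from rational_algebraic_int_is_int[OF a this] obtain k where k: "(1 / 2 ^ r :: complex) = of_int k"
    by (auto elim: Ints_cases)
  hence "complex_of_int (k * 2 ^ r) = 1" by (simp add: field_simps)
  hence "k * 2 ^ r = 1" by (simp only: of_int_eq_1_iff)
  have "(2::int) dvd 2 ^ r" using assms by (simp add: dvd_power)
  moreover have "(2::int) ^ r dvd 1" using \<open>k * 2 ^ r = 1\<close> by (metis dvd_triv_right)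
  ultimately have "(2::int) dvd 1" by (rule dvd_trans)
  thus False by simp
qed

lemma not_alg_int_odd_half:
  assumes "odd n" shows "\<not> algebraic_int (of_nat n / 2 :: complex)"
proof
  assume a: "algebraic_int (of_nat n / 2 :: complex)"
  have "(of_nat n / 2 :: complex) \<in> \<rat>" by simp
  from rational_algebraic_int_is_int[OF a this] obtain k where k: "(of_nat n / 2 :: complex) = of_int k"
    by (auto elim: Ints_cases)
  hence "complex_of_int (2 * k) = of_int (int n)" by (simp add: field_simps)
  hence "2 * k = int n" by (simp only: of_int_eq_iff)
  thus False using assms by (metis even_of_nat dvd_triv_left)
qed

lemma ex_pow2_odd: "(L::nat) > 0 \<Longrightarrow> \<exists>s n. L = 2 ^ s * n \<and> odd n"
proof (induction L rule: less_induct)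
  case (less L)
  show ?case
  proof (cases "odd L")
    case True thus ?thesis by (intro exI[of _ 0] exI[of _ L]) simp
  next
    case False
    then obtain L' where L': "L = 2 * L'" by blast
    with less.prems have "L' < L" "L' > 0" by auto
    from less.IH[OF this] obtain s n where "L' = 2 ^ s * n" "odd n" by blast
    thus ?thesis using L' by (intro exI[of _ "Suc s"] exI[of _ n]) simp
  qed
qed

lemma pow2_root_cases:
  fixes w :: complex
  shows "w ^ (2 ^ s) = 1 \<Longrightarrow> w = 1 \<or> w = -1 \<or> (\<exists>k\<ge>1. w ^ (2 ^ k) = -1)"
proof (induction s arbitrary: w)
  case 0 thus ?case by simp
next
  case (Suc s)
  have "(w ^ 2) ^ (2 ^ s) = 1" using Suc.prems by (simp add: power_mult[symmetric] mult.commute)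
  from Suc.IH[OF this] consider "w ^ 2 = 1" | "w ^ 2 = -1" | k where "k \<ge> 1" "(w ^ 2) ^ (2 ^ k) = -1" by blast
  thus ?case
  proof cases
    case 1 thus ?thesis by (auto simp add: power2_eq_1_iff)
  next
    case 2 thus ?thesis by (intro disjI2 exI[of _ 1]) simp
  next
    case 3 thus ?thesis by (intro disjI2 exI[of _ "Suc k"]) (simp add: power_mult[symmetric] mult.commute)
  qed
qed

lemma geom_zero:
  fixes w :: complex assumes "w ^ n = 1" "w \<noteq> 1" shows "(\<Sum>i<n. w ^ i) = 0"
proof -
  have "(1 - w) * (\<Sum>i<n. w ^ i) = 0" using assms by (simp flip: one_diff_power_eq)
  thus ?thesis using assms by simp
qed

lemma odd_type:
  fixes w :: complex
  assumes "w ^ n = 1" "w \<noteq> 1" "n > 0"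
  shows "\<exists>\<gamma>. algebraic_int \<gamma> \<and> (1 - w) * \<gamma> = of_nat n"
proof -
  have wa: "algebraic_int w" using algebraic_int_root_unity assms by blast
  define \<gamma> where "\<gamma> = (\<Sum>j<n. \<Sum>i<j. w ^ i)"
  have "(1 - w) * \<gamma> = (\<Sum>j<n. 1 - w ^ j)"
    unfolding \<gamma>_def by (simp add: sum_distrib_left one_diff_power_eq)
  also have "\<dots> = of_nat n - (\<Sum>j<n. w ^ j)" by (simp add: sum_subtractf)
  also have "\<dots> = of_nat n" using geom_zero[OF assms(1,2)] by simp
  finally show ?thesis using wa unfolding \<gamma>_def
    by (intro exI[of _ \<gamma>]) (auto simp: \<gamma>_def intro!: algebraic_int_sum_c algebraic_int_power_c)
qed

lemma type_lemma:
  fixes w :: complex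
  assumes "w ^ L = 1" "L > 0" "w \<noteq> 1" "w \<noteq> -1"
  shows "(\<exists>n \<gamma>. odd n \<and> algebraic_int \<gamma> \<and> (1 - w) * \<gamma> = of_nat n) \<or> (\<exists>k\<ge>1. w ^ (2 ^ k) = -1)"
proof -
  obtain s n where sn: "L = 2 ^ s * n" "odd n" using ex_pow2_odd[OF assms(2)] by blast
  show ?thesis
  proof (cases "w ^ (2 ^ s) = 1")
    case True thus ?thesis using pow2_root_cases[OF True] assms by blast
  next
    case False
    define w' where "w' = w ^ (2 ^ s)"
    have "w' ^ n = 1" using assms(1) sn by (simp add: w'_def power_mult)
    moreover have "n > 0" using sn by (intro Nat.gr0I) auto
    ultimately obtain \<gamma> where g: "algebraic_int \<gamma>" "(1 - w') * \<gamma> = of_nat n"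
      using odd_type False w'_def by blast
    have wa: "algebraic_int w" using algebraic_int_root_unity assms by blast
    have "1 - w' = (1 - w) * (\<Sum>i<2^s. w ^ i)" unfolding w'_def by (rule one_diff_power_eq)
    hence "(1 - w) * ((\<Sum>i<2^s. w ^ i) * \<gamma>) = of_nat n" using g by (simp add: mult.assoc)
    moreover have "algebraic_int ((\<Sum>i<2^s. w ^ i) * \<gamma>)"
      using wa g by (intro algebraic_int_mult_c algebraic_int_sum_c algebraic_int_power_c)
    ultimately show ?thesis using sn by blast
  qed
qed

lemma div_cancel_aux: "(H::complex) \<noteq> 0 \<Longrightarrow> 2 / (P * H) * H = 2 / P"
  by (simp add: field_simps)

lemma F_lemma:
  fixes w :: complex
  shows "w ^ (2 ^ k) = -1 \<Longrightarrow> algebraic_int (2 / (1 - w) ^ (2 ^ k))"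
proof (induction k arbitrary: w)
  case 0 thus ?case by simp
next
  case (Suc k)
  have pw: "w ^ (2 ^ Suc k) = (w ^ 2) ^ (2 ^ k)" by (simp only: power_Suc power_mult)
  have IH: "algebraic_int (2 / (1 - w ^ 2) ^ (2 ^ k))" using Suc.IH Suc.prems pw by simp
  have w1: "w \<noteq> 1" using Suc.prems by auto
  have wm1: "w \<noteq> -1"
  proof
    assume "w = -1"
    hence "w ^ (2 ^ Suc k) = ((-1) ^ 2) ^ (2 ^ k)" using pw by simp
    thus False using Suc.prems by simp
  qed
  have "w ^ (2 ^ Suc (Suc k)) = (w ^ (2 ^ Suc k)) ^ 2" by (simp only: power_Suc2 power_mult)
  hence wroot: "w ^ (2 ^ Suc (Suc k)) = 1" using Suc.prems by simp
  have wa: "algebraic_int w" using algebraic_int_root_unity[OF wroot] by simp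
  define j :: nat where "j = 1 + 2 ^ Suc k"
  have wj: "w ^ j = - w" unfolding j_def power_add using Suc.prems by simp
  define h where "h = (\<Sum>i<j. w ^ i)"
  have hw: "(1 - w) * h = 1 + w" unfolding h_def using wj by (simp flip: one_diff_power_eq)
  have ha: "algebraic_int h" unfolding h_def using wa by (intro algebraic_int_sum_c algebraic_int_power_c)
  have hnz: "h \<noteq> 0" using hw wm1 by (auto simp: add_eq_0_iff)
  have "1 - w ^ 2 = (1 - w) * (1 + w)" by (simp add: power2_eq_square algebra_simps)
  also have "\<dots> = (1 - w) * ((1 - w) * h)" using hw by simp
  also have "\<dots> = (1 - w) ^ 2 * h" by (simp add: power2_eq_square)
  finally have e: "1 - w ^ 2 = (1 - w) ^ 2 * h" .
  have H: "h ^ (2 ^ k) \<noteq> 0" using hnz by simp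
  have "(1 - w) ^ (2 ^ Suc k) = ((1 - w) ^ 2) ^ (2 ^ k)" by (simp only: power_Suc power_mult)
  moreover have "(1 - w ^ 2) ^ (2 ^ k) = ((1 - w) ^ 2) ^ (2 ^ k) * h ^ (2 ^ k)"
    unfolding e by (rule power_mult_distrib)
  ultimately have eqF: "2 / (1 - w) ^ (2 ^ Suc k) = 2 / (1 - w ^ 2) ^ (2 ^ k) * h ^ (2 ^ k)"
    using div_cancel_aux[OF H] by simp
  show ?case unfolding eqF by (intro algebraic_int_mult_c algebraic_int_power_c IH ha)
qed

lemma core_half:
  fixes w1 w2 \<gamma> :: complex
  assumes "w2 ^ L = 1" "L > 0" "w2 \<noteq> 1" "w2 \<noteq> -1" "odd n" "algebraic_int \<gamma>"
    "(1 - w1) * \<gamma> = of_nat n" "algebraic_int ((1 - w1) * (1 - w2) / 2)"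
  shows False
proof -
  define \<beta> where "\<beta> = (1 - w1) * (1 - w2) / 2"
  obtain t where t: "n = 2 * t + 1" using assms(5) by (metis oddE)
  have w2a: "algebraic_int w2" using algebraic_int_root_unity assms(1,2) by blast
  have "\<beta> * \<gamma> = ((1 - w1) * \<gamma>) * (1 - w2) / 2" unfolding \<beta>_def by (simp add: ac_simps)
  also have "\<dots> = of_nat n * (1 - w2) / 2" by (simp only: assms(7))
  finally have "\<beta> * \<gamma> = of_nat n * (1 - w2) / 2" .
  hence eq: "(1 - w2) / 2 = \<beta> * \<gamma> - of_nat t * (1 - w2)" unfolding t by (simp add: field_simps)
  have h: "algebraic_int ((1 - w2) / 2)" unfolding eq
    using assms(6,8) w2a unfolding \<beta>_def
    by (intro algebraic_int_diff_c algebraic_int_mult_c) auto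
  from type_lemma[OF assms(1-4)] show False
  proof
    assume "\<exists>n \<gamma>. odd n \<and> algebraic_int \<gamma> \<and> (1 - w2) * \<gamma> = of_nat n"
    then obtain n2 \<gamma>2 where g: "odd n2" "algebraic_int \<gamma>2" "(1 - w2) * \<gamma>2 = of_nat n2" by blast
    have "(1 - w2) / 2 * \<gamma>2 = ((1 - w2) * \<gamma>2) / 2" by simp
    also have "\<dots> = of_nat n2 / 2" by (simp only: g(3))
    finally have "(1 - w2) / 2 * \<gamma>2 = of_nat n2 / 2" .
    moreover have "algebraic_int ((1 - w2) / 2 * \<gamma>2)" using h g by (intro algebraic_int_mult_c)
    ultimately show False using not_alg_int_odd_half[OF g(1)] by simp
  next
    assume "\<exists>k\<ge>1. w2 ^ (2 ^ k) = -1"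
    then obtain k where k: "k \<ge> 1" "w2 ^ (2 ^ k) = -1" by blast
    define M :: nat where "M = 2 ^ k"
    have "(2::nat) ^ 1 \<le> 2 ^ k" using k(1) by (intro power_increasing) auto
    hence M2: "M \<ge> 2" unfolding M_def by simp
    have F: "algebraic_int (2 / (1 - w2) ^ M)" unfolding M_def by (rule F_lemma[OF k(2)])
    have nz: "1 - w2 \<noteq> 0" using assms(3) by simp
    have "((1 - w2) / 2) ^ M * (2 / (1 - w2) ^ M) = 2 / 2 ^ M" using nz by (simp add: power_divide)
    also have "\<dots> = 1 / 2 ^ (M - 1)" using M2 by (cases M) auto
    finally have E: "((1 - w2) / 2) ^ M * (2 / (1 - w2) ^ M) = 1 / 2 ^ (M - 1)" .
    have "algebraic_int (((1 - w2) / 2) ^ M * (2 / (1 - w2) ^ M))"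
      by (intro algebraic_int_mult_c algebraic_int_power_c h F)
    hence "algebraic_int (1 / 2 ^ (M - 1) :: complex)" by (simp only: E)
    moreover have "M - 1 \<ge> 1" using M2 by simp
    ultimately show False using not_alg_int_inv_pow2 by blast
  qed
qed

lemma core:
  fixes w1 w2 :: complex
  assumes "w1 ^ L = 1" "w2 ^ L = 1" "L > 0" "w1 \<noteq> 1" "w1 \<noteq> -1" "w2 \<noteq> 1" "w2 \<noteq> -1"
    "\<not> (w1 ^ 2 = -1 \<and> w2 ^ 2 = -1)" "algebraic_int ((1 - w1) * (1 - w2) / 2)"
  shows False
proof -
  have sym: "algebraic_int ((1 - w2) * (1 - w1) / 2)" using assms(9) by (simp add: mult.commute)
  consider "\<exists>n \<gamma>. odd n \<and> algebraic_int \<gamma> \<and> (1 - w1) * \<gamma> = of_nat n"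
    | "\<exists>n \<gamma>. odd n \<and> algebraic_int \<gamma> \<and> (1 - w2) * \<gamma> = of_nat n"
    | "(\<exists>k\<ge>1. w1 ^ (2 ^ k) = -1) \<and> (\<exists>k\<ge>1. w2 ^ (2 ^ k) = -1)"
    using type_lemma[OF assms(1,3,4,5)] type_lemma[OF assms(2,3,6,7)] by blast
  thus False
  proof cases
    case 1 thus False using core_half[OF assms(2,3,6,7) _ _ _ assms(9)] by blast
  next
    case 2 thus False using core_half[OF assms(1,3,4,5) _ _ _ sym] by blast
  next
    case 3
    then obtain k1 k2 where k: "k1 \<ge> 1" "w1 ^ (2 ^ k1) = -1" "k2 \<ge> 1" "w2 ^ (2 ^ k2) = -1" by blast
    define M :: nat where "M = 2 ^ k1"
    define N :: nat where "N = 2 ^ k2"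
    have "(2::nat) ^ 1 \<le> 2 ^ k1" using k(1) by (intro power_increasing) auto
    hence M2: "M \<ge> 2" unfolding M_def by simp
    have "(2::nat) ^ 1 \<le> 2 ^ k2" using k(3) by (intro power_increasing) auto
    hence N2: "N \<ge> 2" unfolding N_def by simp
    have "\<not> (k1 = 1 \<and> k2 = 1)" using assms(8) k by auto
    hence "k1 \<ge> 2 \<or> k2 \<ge> 2" using k by auto
    hence MN4: "M \<ge> 4 \<or> N \<ge> 4"
    proof
      assume "k1 \<ge> 2" hence "(2::nat) ^ 2 \<le> 2 ^ k1" by (intro power_increasing) auto
      thus ?thesis unfolding M_def by simp
    next
      assume "k2 \<ge> 2" hence "(2::nat) ^ 2 \<le> 2 ^ k2" by (intro power_increasing) auto
      thus ?thesis unfolding N_def by simp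
    qed
    have lt: "M + N < M * N"
    proof (cases "M \<ge> 4")
      case True
      have "M * N \<ge> 4 * N" using True by simp
      moreover have "M * N \<ge> M * 2" using N2 by simp
      ultimately show ?thesis using N2 by linarith
    next
      case False
      hence "N \<ge> 4" using MN4 by simp
      hence "M * N \<ge> M * 4" by simp
      moreover have "M * N \<ge> 2 * N" using M2 by simp
      ultimately show ?thesis using M2 by linarith
    qed
    have F1: "algebraic_int (2 / (1 - w1) ^ M)" unfolding M_def by (rule F_lemma[OF k(2)])
    have F2: "algebraic_int (2 / (1 - w2) ^ N)" unfolding N_def by (rule F_lemma[OF k(4)])
    define a where "a = 1 - w1"
    define b where "b = 1 - w2"
    have a0: "a \<noteq> 0" and b0: "b \<noteq> 0" using assms(4,6) by (auto simp: a_def b_def)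
    have e1: "(a * b / 2) ^ (M * N) = a ^ (M * N) * b ^ (M * N) / 2 ^ (M * N)"
      by (simp add: power_mult_distrib power_divide)
    have e2: "(2 / a ^ M) ^ N = 2 ^ N / a ^ (M * N)" by (simp add: power_divide power_mult)
    have e3: "(2 / b ^ N) ^ M = 2 ^ M / b ^ (M * N)" by (simp add: power_divide power_mult[symmetric] mult.commute)
    have e4: "(2::complex) ^ (M * N) = 2 ^ (M * N - (M + N)) * 2 ^ (M + N)"
      using lt by (simp add: power_add[symmetric])
    have E: "(a * b / 2) ^ (M * N) * (2 / a ^ M) ^ N * (2 / b ^ N) ^ M = 1 / 2 ^ (M * N - (M + N))"
      unfolding e1 e2 e3 e4 using a0 b0 by (simp add: field_simps power_add)
    have "algebraic_int ((a * b / 2) ^ (M * N) * (2 / a ^ M) ^ N * (2 / b ^ N) ^ M)"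
      using assms(9) F1 F2 unfolding a_def b_def by (intro algebraic_int_mult_c algebraic_int_power_c)
    hence "algebraic_int (1 / 2 ^ (M * N - (M + N)) :: complex)" by (simp only: E)
    moreover have "M * N - (M + N) \<ge> 1" using lt by simp
    ultimately show False using not_alg_int_inv_pow2 by blast
  qed
qed


lemma zeta_pow_m: "m > 0 \<Longrightarrow> zeta m ^ m = 1"
  unfolding zeta_def by (simp add: DeMoivre)

lemma sign_half_alg: "s \<in> {1, -1} \<Longrightarrow> algebraic_int ((s - 1) / 2 :: complex)"
  by auto

lemma lin_indep_contra:
  assumes "rat_lin_indep4 a b c d" "of_rat q1 * a + of_rat q2 * b + of_rat q3 * c + of_rat q4 * d = 0"
  shows "q1 = 0 \<and> q2 = 0 \<and> q3 = 0 \<and> q4 = 0"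
  using assms unfolding rat_lin_indep4_def by blast

theorem lemma9p16:
  fixes m p q :: nat and s1 s2 s3 s4 :: complex
  assumes "m \<ge> 2" and "m mod 4 \<noteq> 2" and "p > 0" and "q > 0"
    and "rat_lin_indep4 (zeta m ^ p) (inverse (zeta m ^ p)) (zeta m ^ q) (inverse (zeta m ^ q))"
    and "s1 \<in> {1, -1}" and "s2 \<in> {1, -1}" and "s3 \<in> {1, -1}" and "s4 \<in> {1, -1}"
  shows "\<not> algebraic_int
           ((s1 * zeta m ^ p + s2 * inverse (zeta m ^ p) + s3 * zeta m ^ q + s4 * inverse (zeta m ^ q)) / 2)"
proof
  define x where "x = zeta m ^ p"
  define y where "y = zeta m ^ q"
  define ix where "ix = inverse x"
  define iy where "iy = inverse y"
  assume A: "algebraic_int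
           ((s1 * zeta m ^ p + s2 * inverse (zeta m ^ p) + s3 * zeta m ^ q + s4 * inverse (zeta m ^ q)) / 2)"
  hence A': "algebraic_int ((s1 * x + s2 * ix + s3 * y + s4 * iy) / 2)"
    by (simp add: x_def y_def ix_def iy_def)
  have LI: "rat_lin_indep4 x ix y iy" using assms(5) by (simp add: x_def y_def ix_def iy_def)
  have m0: "m > 0" using assms(1) by simp
  have zm: "zeta m ^ m = 1" by (rule zeta_pow_m[OF m0])
  have xm: "x ^ m = 1" unfolding x_def using zm by (metis power_mult mult.commute power_one)
  have ym: "y ^ m = 1" unfolding y_def using zm by (metis power_mult mult.commute power_one)
  have x0: "x \<noteq> 0" using xm m0 by (metis power_0_left zero_neq_one not_gr0)
  have y0: "y \<noteq> 0" using ym m0 by (metis power_0_left zero_neq_one not_gr0)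
  have ixm: "ix ^ m = 1" unfolding ix_def using xm by (simp add: power_inverse)
  have iym: "iy ^ m = 1" unfolding iy_def using ym by (simp add: power_inverse)
  have xix: "x * ix = 1" unfolding ix_def using x0 by simp
  have yiy: "y * iy = 1" unfolding iy_def using y0 by simp
  have xa: "algebraic_int x" using algebraic_int_root_unity[OF xm m0] .
  have ya: "algebraic_int y" using algebraic_int_root_unity[OF ym m0] .
  have ixa: "algebraic_int ix" using algebraic_int_root_unity[OF ixm m0] .
  have iya: "algebraic_int iy" using algebraic_int_root_unity[OF iym m0] .
  define S0 where "S0 = (x + ix + y + iy) / 2"
  have eqS: "S0 = (s1 * x + s2 * ix + s3 * y + s4 * iy) / 2
      - ((s1 - 1) / 2 * x + (s2 - 1) / 2 * ix + (s3 - 1) / 2 * y + (s4 - 1) / 2 * iy)"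
    unfolding S0_def by (simp add: field_simps)
  have S0a: "algebraic_int S0" unfolding eqS
    by (intro algebraic_int_diff_c algebraic_int_add_c algebraic_int_mult_c A' xa ya ixa iya
      sign_half_alg assms(6-9))
  define w1 where "w1 = - (y * ix)"
  define w2 where "w2 = - (x * y)"
  have "(1 - w1) * (1 - w2) / 2 = y * S0"
  proof -
    have "(1 - w1) * (1 - w2) = 1 + x * y + y * ix + y * y * (x * ix)"
      unfolding w1_def w2_def by (simp add: algebra_simps)
    also have "\<dots> = y * (x + ix + y + iy)" using xix yiy by (simp add: algebra_simps)
    finally show ?thesis unfolding S0_def by simp
  qed
  hence B: "algebraic_int ((1 - w1) * (1 - w2) / 2)" using ya S0a by (simp add: algebraic_int_mult_c)
  have w1L: "w1 ^ (2 * m) = 1"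
  proof -
    have "w1 ^ (2 * m) = (y * ix) ^ (2 * m)" unfolding w1_def by simp
    also have "\<dots> = ((y * ix) ^ m) ^ 2" by (simp only: mult.commute[of 2 m] power_mult)
    also have "\<dots> = 1" by (simp only: power_mult_distrib ym ixm mult_1 power_one)
    finally show ?thesis .
  qed
  have w2L: "w2 ^ (2 * m) = 1"
  proof -
    have "w2 ^ (2 * m) = (x * y) ^ (2 * m)" unfolding w2_def by simp
    also have "\<dots> = ((x * y) ^ m) ^ 2" by (simp only: mult.commute[of 2 m] power_mult)
    also have "\<dots> = 1" by (simp only: power_mult_distrib ym xm mult_1 power_one)
    finally show ?thesis .
  qed
  have c1: "w1 \<noteq> 1"
  proof
    assume "w1 = 1"
    hence "y * ix = -1" unfolding w1_def by (metis add.inverse_inverse)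
    hence "y = - x" using xix by (metis mult.assoc mult.commute mult_1_right mult_minus1)
    hence "of_rat 1 * x + of_rat 0 * ix + of_rat 1 * y + of_rat 0 * iy = 0" by simp
    from lin_indep_contra[OF LI this] show False by simp
  qed
  have c2: "w1 \<noteq> -1"
  proof
    assume "w1 = -1"
    hence "y * ix = 1" unfolding w1_def by simp
    hence "y = x" using xix by (metis mult.assoc mult.commute mult_1_right mult_1)
    hence "of_rat 1 * x + of_rat 0 * ix + of_rat (-1) * y + of_rat 0 * iy = 0" by simp
    from lin_indep_contra[OF LI this] show False by simp
  qed
  have c3: "w2 \<noteq> 1"
  proof
    assume "w2 = 1"
    hence "x * y = -1" unfolding w2_def by (metis add.inverse_inverse)
    hence "y = - ix" using xix by (metis mult.assoc mult.commute mult_1_right mult_minus1)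
    hence "of_rat 0 * x + of_rat 1 * ix + of_rat 1 * y + of_rat 0 * iy = 0" by simp
    from lin_indep_contra[OF LI this] show False by simp
  qed
  have c4: "w2 \<noteq> -1"
  proof
    assume "w2 = -1"
    hence "x * y = 1" unfolding w2_def by simp
    hence "y = ix" using xix by (metis mult.assoc mult.commute mult_1_right mult_1)
    hence "of_rat 0 * x + of_rat 1 * ix + of_rat (-1) * y + of_rat 0 * iy = 0" by simp
    from lin_indep_contra[OF LI this] show False by simp
  qed
  have c5: "\<not> (w1 ^ 2 = -1 \<and> w2 ^ 2 = -1)"
  proof
    assume h: "w1 ^ 2 = -1 \<and> w2 ^ 2 = -1"
    have a1: "y ^ 2 * ix ^ 2 = -1" using h unfolding w1_def by (simp add: power_mult_distrib)
    have a2: "x ^ 2 * y ^ 2 = -1" using h unfolding w2_def by (simp add: power_mult_distrib)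
    have "y ^ 2 * ix ^ 2 = y ^ 2 * x ^ 2" using a1 a2 by (metis mult.commute)
    hence "ix ^ 2 = x ^ 2" using y0 by simp
    hence "(x ^ 2) ^ 2 = x ^ 2 * ix ^ 2" by (simp add: power2_eq_square)
    also have "\<dots> = (x * ix) ^ 2" by (simp add: power_mult_distrib)
    finally have "(x ^ 2) ^ 2 = 1" using xix by simp
    hence "x ^ 2 = 1 \<or> x ^ 2 = -1" by (rule power2_eq_1_iff[THEN iffD1])
    hence "ix = x \<or> ix = - x"
    proof
      assume h2: "x ^ 2 = 1"
      have "ix = ix * x ^ 2" using h2 by simp
      also have "\<dots> = (x * ix) * x" by (simp add: power2_eq_square ac_simps)
      also have "\<dots> = x" using xix by simp
      finally show ?thesis by simp
    next
      assume h2: "x ^ 2 = -1"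
      have "ix = - (ix * x ^ 2)" using h2 by simp
      also have "\<dots> = - ((x * ix) * x)" by (simp add: power2_eq_square ac_simps)
      also have "\<dots> = - x" using xix by simp
      finally show ?thesis by simp
    qed
    thus False
    proof
      assume "ix = x"
      hence "of_rat 1 * x + of_rat (-1) * ix + of_rat 0 * y + of_rat 0 * iy = 0" by simp
      from lin_indep_contra[OF LI this] show False by simp
    next
      assume "ix = - x"
      hence "of_rat 1 * x + of_rat 1 * ix + of_rat 0 * y + of_rat 0 * iy = 0" by simp
      from lin_indep_contra[OF LI this] show False by simp
    qed
  qed
  have L0: "2 * m > 0" using m0 by simp
  show False by (rule core[OF w1L w2L L0 c1 c2 c3 c4 c5 B])
qed

end
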